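(* Consider the two-valued atomic model under the proportional-to-square-roots scheme, with $n_b$ large players of stake $a$ and $n_s$ small players of stake $1$, and suppose $n_s\ge h^2+n_b\lceil h-\sqrt a+1\rceil$. Then the Price of Stability satisfies \[\mathrm{PoS}\le\frac{h+1}{h}\cdot\frac{n_b a+n_s}{n_b(\sqrt a-1)+n_s-h-1}.\]
   Context: Atomic model with threshold $h$: every player has stake $1$ (small) or $a$ (large), with $h,a$ integers, $2\le a\le h-1$. Each player opens her own pool or joins one; pools partition the players; a pool $C$ has reward $\rho(C)=1$ if its total stake is at least $h$ (winning), else $0$. Proportional-to-square-roots scheme: player $i$ with stake $a_i$ in pool $C$ receives $\frac{\sqrt{a_i}}{\sum_{j\in C}\sqrt{a_j}}\rho(C)$. A partition into winning pools is a Nash equilibrium if no player can strictly increase her payment by moving to another pool or opening a new pool alone. $OPT(G)$ is the maximum number of pools of stake at least $h$ in a partition of the players; $W(\Pi)$ is the number of winning pools of $\Pi$; the Price of Stability is $\min_\Pi OPT(G)/W(\Pi)$ over Nash equilibrium partitions. *)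

theory Defs
  imports Complex_Main "HOL-Library.Disjoint_Sets"
begin

definition stake :: "('p \<Rightarrow> nat) \<Rightarrow> 'p set \<Rightarrow> nat" where
  "stake s C = (\<Sum>j\<in>C. s j)"

definition rho :: "nat \<Rightarrow> ('p \<Rightarrow> nat) \<Rightarrow> 'p set \<Rightarrow> real" where
  "rho h s C = (if stake s C \<ge> h then 1 else 0)"

definition sqrt_pay :: "nat \<Rightarrow> ('p \<Rightarrow> nat) \<Rightarrow> 'p set \<Rightarrow> 'p \<Rightarrow> real" where
  "sqrt_pay h s C i = sqrt (real (s i)) / (\<Sum>j\<in>C. sqrt (real (s j))) * rho h s C"

definition winning :: "nat \<Rightarrow> ('p \<Rightarrow> nat) \<Rightarrow> 'p set \<Rightarrow> bool" where
  "winning h s C \<longleftrightarrow> stake s C \<ge> h"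

definition is_NE :: "nat \<Rightarrow> ('p \<Rightarrow> nat) \<Rightarrow> 'p set \<Rightarrow> 'p set set \<Rightarrow> bool" where
  "is_NE h s P Q \<longleftrightarrow>
     partition_on P Q \<and> (\<forall>C\<in>Q. winning h s C) \<and>
     (\<forall>C\<in>Q. \<forall>i\<in>C.
        (\<forall>D\<in>Q. D \<noteq> C \<longrightarrow> sqrt_pay h s (insert i D) i \<le> sqrt_pay h s C i) \<and>
        sqrt_pay h s {i} i \<le> sqrt_pay h s C i)"

definition W :: "nat \<Rightarrow> ('p \<Rightarrow> nat) \<Rightarrow> 'p set set \<Rightarrow> nat" where
  "W h s Q = card {C\<in>Q. winning h s C}"

definition OPT :: "nat \<Rightarrow> ('p \<Rightarrow> nat) \<Rightarrow> 'p set \<Rightarrow> nat" where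
  "OPT h s P = Max {W h s Q | Q. partition_on P Q}"

end

theory Submission imports Defs begin
lemma part_union:
  assumes "partition_on A Q1" "partition_on B Q2" "A \<inter> B = {}"
  shows "partition_on (A \<union> B) (Q1 \<union> Q2) \<and> Q1 \<inter> Q2 = {}"
proof -
  have U1: "\<Union>Q1 = A" and U2: "\<Union>Q2 = B" using assms(1,2) by (auto simp: partition_on_def)
  have E1: "{} \<notin> Q1" and E2: "{} \<notin> Q2" using assms(1,2) by (auto simp: partition_on_def)
  have D1: "disjoint Q1" and D2: "disjoint Q2" using assms(1,2) by (auto simp: partition_on_def)
  have d: "Q1 \<inter> Q2 = {}"
  proof (rule ccontr)
    assume "Q1 \<inter> Q2 \<noteq> {}"
    then obtain X where X: "X \<in> Q1" "X \<in> Q2" by blast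
    then have "X \<subseteq> A" "X \<subseteq> B" "X \<noteq> {}" using U1 U2 E1 by auto
    then show False using assms(3) by blast
  qed
  have "partition_on (A \<union> B) (Q1 \<union> Q2)"
  proof (rule partition_onI)
    show "\<Union>(Q1 \<union> Q2) = A \<union> B" using U1 U2 by simp
    show "{} \<notin> Q1 \<union> Q2" using E1 E2 by simp
    fix p q assume pq: "p \<in> Q1 \<union> Q2" "q \<in> Q1 \<union> Q2" "p \<noteq> q"
    show "disjnt p q"
    proof (cases "p \<in> Q1")
      case True
      show ?thesis
      proof (cases "q \<in> Q1")
        case True
        then show ?thesis using \<open>p \<in> Q1\<close> pq(3) D1 unfolding pairwise_def by blast
      next
        case False
        then have "q \<subseteq> B" using pq U2 by blast
        moreover have "p \<subseteq> A" using True U1 by blast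
        ultimately show ?thesis using assms(3) unfolding disjnt_def by blast
      qed
    next
      case False
      then have pB: "p \<subseteq> B" "p \<in> Q2" using pq U2 by blast+
      show ?thesis
      proof (cases "q \<in> Q1")
        case True
        then have "q \<subseteq> A" using U1 by blast
        then show ?thesis using pB assms(3) unfolding disjnt_def by blast
      next
        case False
        then show ?thesis using pB pq D2 unfolding pairwise_def by blast
      qed
    qed
  qed
  with d show ?thesis by blast
qed

lemma chunks:
  assumes "finite A" "card A = k * c" "c > 0"
  shows "\<exists>Q. partition_on A Q \<and> card Q = k \<and> (\<forall>C\<in>Q. card C = c)"
  using assms
proof (induction k arbitrary: A)
  case 0
  then show ?case by (auto simp: partition_on_empty intro!: exI[of _ "{}"])
next
  case (Suc k)
  then have "c \<le> card A" by simp
  then obtain C where C: "C \<subseteq> A" "card C = c" by (meson obtain_subset_with_card_n)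
  have "card (A - C) = k * c" using C Suc.prems by (simp add: card_Diff_subset finite_subset)
  then obtain Q where Q: "partition_on (A - C) Q" "card Q = k" "\<forall>C\<in>Q. card C = c"
    using Suc.IH Suc.prems by blast
  have Cne: "C \<noteq> {}" using C Suc.prems by auto
  have pu: "partition_on (C \<union> (A - C)) ({C} \<union> Q) \<and> {C} \<inter> Q = {}"
    by (rule part_union[OF partition_on_space[OF Cne] Q(1)]) blast
  have "C \<union> (A - C) = A" using C by blast
  moreover have "finite Q" using Q(1) Suc.prems finite_elements by blast
  ultimately show ?case using pu Q C by (intro exI[of _ "insert C Q"]) auto
qed

lemma bigpools:
  assumes "finite B" "finite A" "A \<inter> B = {}" "card A = card B * m" "m > 0"
  shows "\<exists>Q. partition_on (A \<union> B) Q \<and> card Q = card B \<and>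
     (\<forall>C\<in>Q. \<exists>b\<in>B. \<exists>A'. A' \<subseteq> A \<and> C = insert b A' \<and> card A' = m)"
  using assms
proof (induction B arbitrary: A rule: finite_induct)
  case empty
  then show ?case by (auto simp: partition_on_empty intro!: exI[of _ "{}"])
next
  case (insert b B)
  have cA: "card A = m + card B * m" using insert.prems insert.hyps by simp
  then have "m \<le> card A" by simp
  then obtain A0 where A0: "A0 \<subseteq> A" "card A0 = m" by (meson obtain_subset_with_card_n)
  have fA0: "finite A0" using A0(1) insert.prems(1) finite_subset by blast
  have c2: "card (A - A0) = card B * m" using A0 cA fA0 by (simp add: card_Diff_subset)
  have d2: "(A - A0) \<inter> B = {}" using insert.prems(2) by blast
  have f2: "finite (A - A0)" using insert.prems(1) by simp
  obtain Q where Q: "partition_on ((A - A0) \<union> B) Q" "card Q = card B"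
     "\<forall>C\<in>Q. \<exists>b\<in>B. \<exists>A'. A' \<subseteq> A - A0 \<and> C = insert b A' \<and> card A' = m"
    using insert.IH[OF f2 d2 c2 insert.prems(4)] by blast
  have bA: "b \<notin> A" using insert.prems(2) by blast
  have dj: "insert b A0 \<inter> ((A - A0) \<union> B) = {}" using bA insert.hyps(2) A0(1) insert.prems(2) by blast
  have pu: "partition_on (insert b A0 \<union> ((A - A0) \<union> B)) ({insert b A0} \<union> Q) \<and> {insert b A0} \<inter> Q = {}"
    by (rule part_union[OF partition_on_space Q(1) dj]) simp
  have e: "insert b A0 \<union> ((A - A0) \<union> B) = A \<union> insert b B" using A0(1) by blast
  have fQ: "finite Q" using Q(1) insert.hyps(1) f2 finite_elements by blast
  have nin: "insert b A0 \<notin> Q" using pu by blast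
  have p: "partition_on (A \<union> insert b B) (insert (insert b A0) Q)" using pu e by simp
  have c: "card (insert (insert b A0) Q) = card (insert b B)" using fQ nin Q(2) insert.hyps by simp
  have "\<forall>C\<in>insert (insert b A0) Q. \<exists>b'\<in>insert b B. \<exists>A'. A' \<subseteq> A \<and> C = insert b' A' \<and> card A' = m"
  proof
    fix C assume "C \<in> insert (insert b A0) Q"
    then consider "C = insert b A0" | "C \<in> Q" by blast
    then show "\<exists>b'\<in>insert b B. \<exists>A'. A' \<subseteq> A \<and> C = insert b' A' \<and> card A' = m"
    proof cases
      case 1 then show ?thesis using A0 by blast
    next
      case 2
      then obtain b' A' where "b' \<in> B" "A' \<subseteq> A - A0" "C = insert b' A'" "card A' = m" using Q(3) by blast
      then show ?thesis by blast
    qed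
  qed
  with p c show ?case by blast
qed

lemma NE_lemma:
  fixes P :: "'p set"
  assumes fin: "finite P" and part: "partition_on P Q"
    and good: "\<forall>C\<in>Q. h \<le> stake s C \<and> real h \<le> (\<Sum>j\<in>C. sqrt (real (s j)))
                 \<and> (\<Sum>j\<in>C. sqrt (real (s j))) \<le> real h + 1"
    and pos: "\<forall>i\<in>P. 1 \<le> s i \<and> s i < h"
  shows "is_NE h s P Q"
  unfolding is_NE_def
proof (intro conjI ballI allI impI)
  show "partition_on P Q" by fact
  fix C assume C: "C \<in> Q"
  then show "winning h s C" using good by (simp add: winning_def)
  have CP: "C \<subseteq> P" using part C unfolding partition_on_def by blast
  have rC: "rho h s C = 1" using good C by (simp add: rho_def)
  have SC: "real h \<le> (\<Sum>j\<in>C. sqrt (real (s j)))" "(\<Sum>j\<in>C. sqrt (real (s j))) \<le> real h + 1"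
    using good C by auto
  have "C \<noteq> {}" using part C unfolding partition_on_def by blast
  then obtain i0 where "i0 \<in> C" by blast
  then have hpos: "h > 0" using pos CP by fastforce
  {
    fix i assume i: "i \<in> C"
    have si: "1 \<le> s i" "s i < h" using pos i CP by auto
    have sq1: "1 \<le> sqrt (real (s i))" using si by simp
    have payC: "sqrt_pay h s C i = sqrt (real (s i)) / (\<Sum>j\<in>C. sqrt (real (s j)))"
      by (simp add: sqrt_pay_def rC)
    have nn: "0 \<le> sqrt_pay h s C i" unfolding payC by (intro divide_nonneg_nonneg) (auto intro: sum_nonneg)
    have "stake s {i} < h" using si by (simp add: stake_def)
    then have "sqrt_pay h s {i} i = 0" by (simp add: sqrt_pay_def rho_def)
    with nn show "sqrt_pay h s {i} i \<le> sqrt_pay h s C i" by simp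
    fix D assume D: "D \<in> Q" "D \<noteq> C"
    have DP: "D \<subseteq> P" using part D unfolding partition_on_def by blast
    have iD: "i \<notin> D" using part C D i unfolding partition_on_def disjoint_def by blast
    have fD: "finite D" using DP fin finite_subset by blast
    have SD: "real h \<le> (\<Sum>j\<in>D. sqrt (real (s j)))" using good D by auto
    have sumi: "(\<Sum>j\<in>insert i D. sqrt (real (s j))) = sqrt (real (s i)) + (\<Sum>j\<in>D. sqrt (real (s j)))"
      using fD iD by simp
    have r1: "rho h s (insert i D) \<le> 1" "0 \<le> rho h s (insert i D)" by (auto simp: rho_def)
    have "sqrt_pay h s (insert i D) i \<le> sqrt (real (s i)) / (\<Sum>j\<in>insert i D. sqrt (real (s j)))"
    proof -
      have "0 \<le> sqrt (real (s i)) / (\<Sum>j\<in>insert i D. sqrt (real (s j)))"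
        unfolding sumi using sq1 SD by simp
      then show ?thesis unfolding sqrt_pay_def using r1 mult_left_le[of "rho h s (insert i D)" "sqrt (real (s i)) / (\<Sum>j\<in>insert i D. sqrt (real (s j)))"] by (simp only:)
    qed
    also have "\<dots> \<le> sqrt (real (s i)) / (\<Sum>j\<in>C. sqrt (real (s j)))"
    proof (rule divide_left_mono)
      show "(\<Sum>j\<in>C. sqrt (real (s j))) \<le> (\<Sum>j\<in>insert i D. sqrt (real (s j)))"
        unfolding sumi using SC SD sq1 by linarith
      show "0 \<le> sqrt (real (s i))" by simp
      show "0 < (\<Sum>j\<in>insert i D. sqrt (real (s j))) * (\<Sum>j\<in>C. sqrt (real (s j)))"
        unfolding sumi using SC SD sq1 hpos of_nat_0_less_iff[of h, where 'a=real] by (intro mult_pos_pos) linarith+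
    qed
    finally show "sqrt_pay h s (insert i D) i \<le> sqrt_pay h s C i" unfolding payC .
  }
qed

lemma W_bound:
  fixes P :: "'p set"
  assumes fin: "finite P" and part: "partition_on P Q"
  shows "h * W h s Q \<le> stake s P"
proof -
  define Wn where "Wn = {C\<in>Q. winning h s C}"
  have fQ: "finite Q" using fin part finite_elements by blast
  have fW: "finite Wn" using fQ Wn_def by simp
  have fC: "\<forall>C\<in>Wn. finite C" using part fin unfolding Wn_def partition_on_def
    by (auto intro: finite_subset)
  have dj: "pairwise disjnt Wn" using part unfolding Wn_def partition_on_def disjoint_def pairwise_def disjnt_def
    by blast
  have "h * W h s Q = (\<Sum>C\<in>Wn. h)" by (simp add: W_def Wn_def)
  also have "\<dots> \<le> (\<Sum>C\<in>Wn. stake s C)"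
    by (intro sum_mono) (simp add: Wn_def winning_def)
  also have "\<dots> = (\<Sum>j\<in>\<Union>Wn. s j)" unfolding stake_def
    using sum.Union_disjoint[of Wn s] fC dj fW
    by (simp add: pairwise_def disjnt_def)
  also have "\<dots> \<le> (\<Sum>j\<in>P. s j)"
    using part fin unfolding Wn_def partition_on_def by (intro sum_mono2) auto
  finally show ?thesis by (simp add: stake_def)
qed

lemma OPT_bound:
  fixes P :: "'p set"
  assumes fin: "finite P" and part: "partition_on P Q"
  shows "h * OPT h s P \<le> stake s P"
proof -
  let ?S = "{W h s Q | Q. partition_on P Q}"
  have "?S = (\<lambda>Q. W h s Q) ` {Q. partition_on P Q}" by blast
  then have "finite ?S" using finitely_many_partition_on[OF fin] by simp
  moreover have "?S \<noteq> {}" using part by blast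
  ultimately have "OPT h s P \<in> ?S" unfolding OPT_def by (rule Max_in)
  then obtain Q' where "partition_on P Q'" "OPT h s P = W h s Q'" by blast
  then show ?thesis using W_bound fin by metis
qed
lemma sum_ones:
  assumes "\<forall>j\<in>X. s j = (1::nat)"
  shows "(\<Sum>j\<in>X. s j) = card X" "(\<Sum>j\<in>X. sqrt (real (s j))) = real (card X)"
  using assms by simp_all

theorem theoremD2:
  fixes P :: "'p set" and s :: "'p \<Rightarrow> nat" and h a n_b n_s :: nat
  assumes "finite P"
    and "2 \<le> a" and "a \<le> h - 1"
    and "\<forall>i\<in>P. s i = 1 \<or> s i = a"
    and "n_b = card {i\<in>P. s i = a}"
    and "n_s = card {i\<in>P. s i = 1}"
    and "real n_s \<ge> real h ^ 2 + real n_b * real_of_int \<lceil>real h - sqrt (real a) + 1\<rceil>"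
  shows "\<exists>Q. is_NE h s P Q \<and>
           real (OPT h s P) / real (W h s Q)
             \<le> (real h + 1) / real h *
                ((real n_b * real a + real n_s) /
                 (real n_b * (sqrt (real a) - 1) + real n_s - real h - 1))"
proof -
  note fin = assms(1)
  have h3: "3 \<le> h" "a < h" using assms(2,3) by auto
  define B where "B = {i\<in>P. s i = a}"
  define Sm where "Sm = {i\<in>P. s i = 1}"
  have PBS: "P = B \<union> Sm" "B \<inter> Sm = {}" using assms(2,4) unfolding B_def Sm_def by auto
  have finB: "finite B" and finSm: "finite Sm" using fin unfolding B_def Sm_def by auto
  have cB: "card B = n_b" and cSm: "card Sm = n_s" using assms(5,6) B_def Sm_def by auto
  have sa1: "1 \<le> sqrt (real a)" using assms(2) by simp
  have "sqrt (real a) * 1 \<le> sqrt (real a) * sqrt (real a)" using sa1 by (intro mult_left_mono) auto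
  then have sale: "sqrt (real a) \<le> real a" by simp
  have salt: "sqrt (real a) < real h" using sale h3 by linarith
  define m where "m = nat \<lceil>real h - sqrt (real a)\<rceil>"
  have mreal: "real m = real_of_int \<lceil>real h - sqrt (real a)\<rceil>"
    unfolding m_def using salt by (simp add: ceiling_less_zero)
  have m1: "real h - sqrt (real a) \<le> real m" "real m < real h - sqrt (real a) + 1"
    unfolding mreal by linarith+
  have mpos: "m > 0" using m1 salt by simp
  have ce: "real_of_int \<lceil>real h - sqrt (real a) + 1\<rceil> = real m + 1"
    unfolding mreal by simp
  have nsreal: "real n_s \<ge> real h * real h + real n_b * real m + real n_b"
    using assms(7) unfolding ce by (simp add: power2_eq_square algebra_simps)
  then have "real (h * h + n_b * m) \<le> real n_s" by simp
  then have nsge: "n_s \<ge> h * h + n_b * m" by (simp only: of_nat_le_iff)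
  define r where "r = n_s - n_b * m"
  define q where "q = r div h"
  define t where "t = r mod h"
  have rge: "r \<ge> h * h" using nsge r_def by simp
  have rqt: "r = q * h + t" unfolding q_def t_def by simp
  have tlt: "t < h" unfolding t_def using h3 by simp
  have "h * h div h \<le> r div h" by (rule div_le_mono[OF rge])
  then have qge: "q \<ge> h" unfolding q_def using h3 by simp
  have tq: "t \<le> q" using tlt qge by simp
  have nsr: "n_s = n_b * m + r" using nsge r_def by simp
  obtain Sm1 where Sm1: "Sm1 \<subseteq> Sm" "card Sm1 = n_b * m"
    using obtain_subset_with_card_n[of "n_b * m" Sm] cSm nsr by auto
  have cR: "card (Sm - Sm1) = r" using Sm1 cSm nsr finSm by (simp add: card_Diff_subset finite_subset)
  have "t * (h + 1) \<le> r" using rqt tq by (simp add: algebra_simps mult_le_mono1)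
  then obtain Sm3 where Sm3: "Sm3 \<subseteq> Sm - Sm1" "card Sm3 = t * (h + 1)"
    using obtain_subset_with_card_n[of "t * (h+1)" "Sm - Sm1"] cR by auto
  define Sm2 where "Sm2 = Sm - Sm1 - Sm3"
  have "card Sm2 = r - t * (h + 1)" unfolding Sm2_def using Sm3 cR finSm
    by (simp add: card_Diff_subset finite_subset)
  also have "\<dots> = (q - t) * h" using rqt tq by (simp add: algebra_simps diff_mult_distrib)
  finally have cSm2: "card Sm2 = (q - t) * h" .
  have fSm1: "finite Sm1" and fSm2: "finite Sm2" and fSm3: "finite Sm3"
    using Sm1 Sm3 finSm Sm2_def by (auto intro: finite_subset)
  obtain Q1 where Q1: "partition_on (Sm1 \<union> B) Q1" "card Q1 = card B"
     "\<forall>C\<in>Q1. \<exists>b\<in>B. \<exists>A'. A' \<subseteq> Sm1 \<and> C = insert b A' \<and> card A' = m"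
    using bigpools[OF finB fSm1 _ _ mpos] Sm1 PBS cB by blast
  obtain Q2 where Q2: "partition_on Sm2 Q2" "card Q2 = q - t" "\<forall>C\<in>Q2. card C = h"
    using chunks[OF fSm2 cSm2] h3 by auto
  obtain Q3 where Q3: "partition_on Sm3 Q3" "card Q3 = t" "\<forall>C\<in>Q3. card C = h + 1"
    using chunks[OF fSm3 Sm3(2)] by auto
  have pu1: "partition_on ((Sm1 \<union> B) \<union> Sm2) (Q1 \<union> Q2) \<and> Q1 \<inter> Q2 = {}"
    by (rule part_union[OF Q1(1) Q2(1)]) (use PBS Sm1 Sm2_def in auto)
  have pu2: "partition_on (((Sm1 \<union> B) \<union> Sm2) \<union> Sm3) ((Q1 \<union> Q2) \<union> Q3) \<and> (Q1 \<union> Q2) \<inter> Q3 = {}"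
    by (rule part_union[OF conjunct1[OF pu1] Q3(1)]) (use PBS Sm1 Sm3 Sm2_def in auto)
  define Q where "Q = (Q1 \<union> Q2) \<union> Q3"
  have "((Sm1 \<union> B) \<union> Sm2) \<union> Sm3 = P" using PBS Sm1 Sm3 Sm2_def by auto
  then have partQ: "partition_on P Q" using pu2 Q_def by simp
  have fQ1: "finite Q1" using Q1(1) fSm1 finB finite_elements by blast
  have fQ2: "finite Q2" using Q2(1) fSm2 finite_elements by blast
  have fQ3: "finite Q3" using Q3(1) fSm3 finite_elements by blast
  have cQ: "card Q = n_b + q" unfolding Q_def
    using pu1 pu2 fQ1 fQ2 fQ3 Q1(2) Q2(2) Q3(2) cB tq by (simp add: card_Un_disjoint)
  have good: "\<forall>C\<in>Q. h \<le> stake s C \<and> real h \<le> (\<Sum>j\<in>C. sqrt (real (s j)))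
                 \<and> (\<Sum>j\<in>C. sqrt (real (s j))) \<le> real h + 1"
  proof
    fix C assume "C \<in> Q"
    then consider "C \<in> Q1" | "C \<in> Q2" | "C \<in> Q3" unfolding Q_def by blast
    then show "h \<le> stake s C \<and> real h \<le> (\<Sum>j\<in>C. sqrt (real (s j)))
                 \<and> (\<Sum>j\<in>C. sqrt (real (s j))) \<le> real h + 1"
    proof cases
      case 1
      then obtain b A' where bA: "b \<in> B" "A' \<subseteq> Sm1" "C = insert b A'" "card A' = m"
        using Q1(3) by blast
      have fA: "finite A'" using bA fSm1 finite_subset by blast
      have bn: "b \<notin> A'" using bA Sm1 PBS by blast
      have o: "\<forall>j\<in>A'. s j = 1" using bA Sm1 Sm_def by auto
      have sb: "s b = a" using bA B_def by auto
      have st: "stake s C = a + m" unfolding stake_def bA(3) using fA bn sum_ones(1)[OF o] sb bA(4) by simp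
      have sq: "(\<Sum>j\<in>C. sqrt (real (s j))) = sqrt (real a) + real m"
        unfolding bA(3) using fA bn sum_ones(2)[OF o] sb bA(4) by simp
      have "real h \<le> real a + real m" using m1 sale by linarith
      then have "h \<le> a + m" by linarith
      then show ?thesis using st sq m1 by simp
    next
      case 2
      have o: "\<forall>j\<in>C. s j = 1" using 2 Q2(1) Sm2_def Sm_def unfolding partition_on_def by auto
      show ?thesis unfolding stake_def sum_ones[OF o] using 2 Q2(3) by simp
    next
      case 3
      have o: "\<forall>j\<in>C. s j = 1" using 3 Q3(1) Sm3 Sm_def unfolding partition_on_def by auto
      show ?thesis unfolding stake_def sum_ones[OF o] using 3 Q3(3) by simp
    qed
  qed
  have pos: "\<forall>i\<in>P. 1 \<le> s i \<and> s i < h" using assms(4) h3 assms(2) by auto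
  have NE: "is_NE h s P Q" by (rule NE_lemma[OF fin partQ good pos])
  have Wq: "W h s Q = n_b + q"
  proof -
    have "{C\<in>Q. winning h s C} = Q" using good by (auto simp: winning_def)
    then show ?thesis using cQ by (simp add: W_def)
  qed
  have stP: "stake s P = n_b * a + n_s"
  proof -
    have "stake s P = (\<Sum>j\<in>B. s j) + (\<Sum>j\<in>Sm. s j)"
      unfolding stake_def PBS(1) using finB finSm PBS(2) by (simp add: sum.union_disjoint)
    also have "(\<Sum>j\<in>B. s j) = (\<Sum>j\<in>B. a)" by (rule sum.cong) (auto simp: B_def)
    also have "(\<Sum>j\<in>Sm. s j) = (\<Sum>j\<in>Sm. 1)" by (rule sum.cong) (auto simp: Sm_def)
    finally show ?thesis using cB cSm by simp
  qed
  have opt: "h * OPT h s P \<le> n_b * a + n_s" using OPT_bound[OF fin partQ, of h s] stP by simp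
  define Ov where "Ov = real (OPT h s P)"
  define T where "T = real n_b * real a + real n_s"
  define D where "D = real n_b * (sqrt (real a) - 1) + real n_s - real h - 1"
  define Wr where "Wr = real (n_b + q)"
  have hpos: "real h > 0" using h3 by simp
  have "real (h * OPT h s P) \<le> real (n_b * a + n_s)" using opt by (simp only: of_nat_le_iff)
  then have "real h * Ov \<le> T" by (simp add: Ov_def T_def)
  then have Ole: "Ov \<le> T / real h" using hpos by (simp add: pos_le_divide_eq mult.commute)
  have Wpos: "Wr > 0" unfolding Wr_def using qge h3 by simp
  have hh: "real h * real h \<ge> 3 * real h" using h3 hpos by (simp add: mult_right_mono)
  have nsr': "real n_s = real n_b * real m + real q * real h + real t"
    using nsr rqt by simp
  have "real n_b * (sqrt (real a) - 1) \<ge> 0" using sa1 by simp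
  moreover have "real n_b * real m \<ge> 0" by simp
  ultimately have Dpos: "D > 0" unfolding D_def using nsreal hh h3 by linarith
  have "real n_b * (sqrt (real a) + real m) \<le> real n_b * (real h + 1)"
    using m1 by (intro mult_left_mono) auto
  moreover have "real t \<le> real h" using tlt by simp
  ultimately have DW: "D \<le> (real h + 1) * Wr" unfolding D_def Wr_def nsr'
    by (simp add: algebra_simps)
  have inv: "1 / Wr \<le> (real h + 1) / D" using DW Wpos Dpos by (simp add: field_simps)
  have T0: "0 \<le> T" unfolding T_def by simp
  have "Ov / Wr = Ov * (1 / Wr)" by simp
  also have "\<dots> \<le> (T / real h) * ((real h + 1) / D)"
    using Ole inv Wpos T0 hpos by (intro mult_mono) (auto simp: Ov_def)
  also have "\<dots> = (real h + 1) / real h * (T / D)" by simp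
  finally have fin_ineq: "Ov / Wr \<le> (real h + 1) / real h * (T / D)" .
  have Wr_eq: "real (W h s Q) = Wr" using Wq Wr_def by simp
  have "real (OPT h s P) / real (W h s Q)
             \<le> (real h + 1) / real h *
                ((real n_b * real a + real n_s) /
                 (real n_b * (sqrt (real a) - 1) + real n_s - real h - 1))"
    using fin_ineq unfolding Wr_eq Ov_def T_def D_def .
  with NE show ?thesis by blast
qed
end
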